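(* Let $-\infty<a<b<\infty$, $K\in\mathbb{R}$, $g\in C^1(\mathbb{R})$, and let $f(x,u,p)=(p-K)^2+g(u)$ for $(x,u,p)\in[a,b]\times\mathbb{R}\times\mathbb{R}$, with $\Phi(u)=\int_a^b f(x,u(x),u'(x))\,dx$ for $u\in C^1([a,b])$. Let $I^{D}_a,I^{D}_b\subset\{1\}$ be arbitrary, let $u^0\in C^1([a,b])$, and let $\mathcal{M}=u^0+C^1_{D}$. If $u^0$ is a weak minimizer of $\Phi$ in $\mathcal{M}$, then $u^0$ is a strong minimizer of $\Phi$ in $\mathcal{M}$.
   Context: Here $N=1$ and $C^1_{D}=\{v\in C^1([a,b]): v(a)=0 \text{ if } 1\in I^{D}_a,\ v(b)=0 \text{ if } 1\in I^{D}_b\}$ (so at each endpoint the value is either fixed to that of $u^0$ or free). A function $w\in\mathcal{M}$ is a weak (resp. strong) minimizer of $\Phi$ in $\mathcal{M}$ if there is $\varepsilon>0$ such that $\Phi(v)\ge\Phi(w)$ for all $v\in\mathcal{M}$ with $\|v-w\|_{C^1}<\varepsilon$ (resp. $\|v-w\|_{C}<\varepsilon$), where $\|v\|_{C^1}=\max|v|+\max|v'|$ and $\|v\|_C=\max|v|$ over $[a,b]$. *)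

theory Defs
  imports "HOL-Analysis.Analysis"
begin

definition C1_on :: "real \<Rightarrow> real \<Rightarrow> (real \<Rightarrow> real) \<Rightarrow> bool" where
  "C1_on a b u \<longleftrightarrow> (\<exists>u'. continuous_on {a..b} u' \<and>
      (\<forall>x\<in>{a..b}. (u has_real_derivative u' x) (at x within {a..b})))"

definition dC1 :: "real \<Rightarrow> real \<Rightarrow> (real \<Rightarrow> real) \<Rightarrow> real \<Rightarrow> real" where
  "dC1 a b u x = vector_derivative u (at x within {a..b})"

definition supnorm :: "real \<Rightarrow> real \<Rightarrow> (real \<Rightarrow> real) \<Rightarrow> real" where
  "supnorm a b v = (SUP x\<in>{a..b}. \<bar>v x\<bar>)"

definition C1norm :: "real \<Rightarrow> real \<Rightarrow> (real \<Rightarrow> real) \<Rightarrow> real" where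
  "C1norm a b v = supnorm a b v + supnorm a b (dC1 a b v)"

definition Phi :: "real \<Rightarrow> real \<Rightarrow> real \<Rightarrow> (real \<Rightarrow> real) \<Rightarrow> (real \<Rightarrow> real) \<Rightarrow> real" where
  "Phi a b K g u = integral {a..b} (\<lambda>x. (dC1 a b u x - K)\<^sup>2 + g (u x))"

text \<open>M = u0 + C^1_D; Da (resp. Db) means 1 \<in> I^D_a (resp. 1 \<in> I^D_b).\<close>
definition admissible :: "real \<Rightarrow> real \<Rightarrow> bool \<Rightarrow> bool \<Rightarrow> (real \<Rightarrow> real) \<Rightarrow> (real \<Rightarrow> real) set" where
  "admissible a b Da Db u0 = {v. C1_on a b v \<and> (Da \<longrightarrow> v a = u0 a) \<and> (Db \<longrightarrow> v b = u0 b)}"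

definition weak_minimizer where
  "weak_minimizer a b F M w \<longleftrightarrow> w \<in> M \<and>
     (\<exists>\<epsilon>>0. \<forall>v\<in>M. C1norm a b (\<lambda>x. v x - w x) < \<epsilon> \<longrightarrow> F v \<ge> F w)"

definition strong_minimizer where
  "strong_minimizer a b F M w \<longleftrightarrow> w \<in> M \<and>
     (\<exists>\<epsilon>>0. \<forall>v\<in>M. supnorm a b (\<lambda>x. v x - w x) < \<epsilon> \<longrightarrow> F v \<ge> F w)"

end

theory Submission
  imports Defs
begin

lemma ci: fixes f :: "real \<Rightarrow> real" shows "continuous_on {a..b} f \<Longrightarrow> f integrable_on {a..b}"
  by (rule integrable_continuous_interval)

lemma int_le_const:
  fixes f :: "real \<Rightarrow> real"
  assumes "a \<le> b" "continuous_on {a..b} f" "\<And>x. x \<in> {a..b} \<Longrightarrow> f x \<le> C"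
  shows "integral {a..b} f \<le> (b - a) * C"
proof -
  have "integral {a..b} f \<le> integral {a..b} (\<lambda>x. C)"
    by (rule integral_le) (auto intro!: ci assms(2,3) continuous_intros)
  then show ?thesis using assms(1) by simp
qed

context fixes a b :: real assumes ab: "a < b" begin

lemma C1_dC1:
  assumes "C1_on a b v"
  shows "continuous_on {a..b} (dC1 a b v)"
    and "\<And>x. x \<in> {a..b} \<Longrightarrow> (v has_real_derivative dC1 a b v x) (at x within {a..b})"
proof -
  obtain u' where c: "continuous_on {a..b} u'" and d: "\<And>x. x\<in>{a..b} \<Longrightarrow> (v has_real_derivative u' x) (at x within {a..b})"
    using assms unfolding C1_on_def by blast
  have eq: "dC1 a b v x = u' x" if "x \<in> {a..b}" for x
    unfolding dC1_def
    using vector_derivative_within_cbox[of a b x v "u' x"] ab that d[OF that]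
    by (simp add: has_real_derivative_iff_has_vector_derivative)
  show "continuous_on {a..b} (dC1 a b v)" by (rule continuous_on_eq[OF c]) (simp add: eq)
  show "(v has_real_derivative dC1 a b v x) (at x within {a..b})" if "x \<in> {a..b}" for x
    using d[OF that] eq[OF that] by simp
qed

lemma C1_intro:
  assumes "continuous_on {a..b} d" "\<And>x. x \<in> {a..b} \<Longrightarrow> (v has_real_derivative d x) (at x within {a..b})"
  shows "C1_on a b v" and "\<And>x. x \<in> {a..b} \<Longrightarrow> dC1 a b v x = d x"
proof -
  show "C1_on a b v" unfolding C1_on_def using assms by blast
  show "dC1 a b v x = d x" if "x \<in> {a..b}" for x
    unfolding dC1_def
    using vector_derivative_within_cbox[of a b x v "d x"] ab that assms(2)[OF that]
    by (simp add: has_real_derivative_iff_has_vector_derivative)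
qed

lemma C1_cont:
  assumes "C1_on a b v" shows "continuous_on {a..b} v"
  unfolding continuous_on_eq_continuous_within
  using C1_dC1(2)[OF assms] DERIV_continuous by blast

lemma supnorm_ge:
  assumes "continuous_on {a..b} v" "x \<in> {a..b}"
  shows "\<bar>v x\<bar> \<le> supnorm a b v"
proof -
  have "continuous_on {a..b} (\<lambda>x. \<bar>v x\<bar>)" using assms(1) by (intro continuous_intros)
  then have "compact ((\<lambda>x. \<bar>v x\<bar>) ` {a..b})" by (intro compact_continuous_image) auto
  then have "bdd_above ((\<lambda>x. \<bar>v x\<bar>) ` {a..b})" by (intro bounded_imp_bdd_above compact_imp_bounded)
  then show ?thesis unfolding supnorm_def using assms(2) by (rule cSUP_upper2) simp
qed

lemma supnorm_le:
  assumes "\<And>x. x \<in> {a..b} \<Longrightarrow> \<bar>v x\<bar> \<le> c"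
  shows "supnorm a b v \<le> c"
  unfolding supnorm_def using ab assms by (intro cSUP_least) auto




lemma clip_ineq:
  fixes M y :: real assumes "M > 0"
  shows "2 * M * \<bar>y - max (-M) (min M y)\<bar> \<le> y\<^sup>2 - (max (-M) (min M y))\<^sup>2"
proof (cases "y > M")
  case True
  then have "max (-M) (min M y) = M" using assms by simp
  moreover have "0 \<le> (y - M)\<^sup>2" by simp
  ultimately show ?thesis using True by (simp add: power2_eq_square algebra_simps)
next
  case False
  show ?thesis
  proof (cases "y < -M")
    case True
    then have "max (-M) (min M y) = -M" using assms by simp
    moreover have "0 \<le> (y + M)\<^sup>2" by simp
    ultimately show ?thesis using True by (simp add: power2_eq_square algebra_simps)
  next
    case False
    then have "max (-M) (min M y) = y" using \<open>\<not> y > M\<close> by simp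
    then show ?thesis by simp
  qed
qed

lemma construct:
  fixes h :: "real \<Rightarrow> real" and \<delta> M :: real
  assumes hC: "C1_on a b h" and hbd: "\<And>x. x \<in> {a..b} \<Longrightarrow> \<bar>h x\<bar> \<le> \<delta>"
    and ha: "Da \<longrightarrow> h a = 0" and hb: "Db \<longrightarrow> h b = 0" and Mpos: "M > 0"
    and Qle: "integral {a..b} (\<lambda>x. (dC1 a b h x)\<^sup>2) \<le> M * \<delta>"
  obtains k E where "C1_on a b k" "Da \<longrightarrow> k a = 0" "Db \<longrightarrow> k b = 0"
    "\<And>x. x \<in> {a..b} \<Longrightarrow> \<bar>h x - k x\<bar> \<le> 2 * E"
    "\<And>x. x \<in> {a..b} \<Longrightarrow> \<bar>dC1 a b k x\<bar> \<le> M + E / (b - a)"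
    "2 * M * E \<le> integral {a..b} (\<lambda>x. (dC1 a b h x)\<^sup>2 - (dC1 a b k x)\<^sup>2)"
    "0 \<le> E" "2 * M * E \<le> M * \<delta>"
proof -
  note hd = C1_dC1[OF hC]
  define hp where "hp = dC1 a b h"
  have hpc: "continuous_on {a..b} hp" using hd(1) by (simp add: hp_def)
  have hpd: "\<And>x. x \<in> {a..b} \<Longrightarrow> (h has_real_derivative hp x) (at x within {a..b})" using hd(2) by (simp add: hp_def)
  define T where "T = (\<lambda>y::real. max (-M) (min M y))"
  define \<rho> where "\<rho> = (\<lambda>x. hp x - T (hp x))"
  have Tc: "continuous_on {a..b} (\<lambda>x. T (hp x))" unfolding T_def by (intro continuous_intros hpc)
  have \<rho>c: "continuous_on {a..b} \<rho>" unfolding \<rho>_def by (intro continuous_intros hpc Tc)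
  define D where "D = (\<lambda>x. integral {a..x} \<rho>)"
  define E where "E = integral {a..b} (\<lambda>x. \<bar>\<rho> x\<bar>)"
  define L where "L = b - a"
  have Lpos: "L > 0" using ab by (simp add: L_def)
  define \<alpha> where "\<alpha> = (if Db \<and> \<not> Da then 1 else 0 :: real)"
  define \<beta> where "\<beta> = (if Da \<and> Db then 1 else 0 :: real)"
  define c where "c = D b / L"
  define k where "k = (\<lambda>x. h x - D x + \<alpha> * D b + \<beta> * c * (x - a))"
  have Dder: "(D has_real_derivative \<rho> x) (at x within {a..b})" if "x \<in> {a..b}" for x
    unfolding D_def by (rule integral_has_real_derivative[OF \<rho>c that])
  have kder: "(k has_real_derivative hp x - \<rho> x + \<beta> * c) (at x within {a..b})" if "x \<in> {a..b}" for x
    unfolding k_def by (auto intro!: derivative_eq_intros hpd Dder that)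
  have kcd: "continuous_on {a..b} (\<lambda>x. hp x - \<rho> x + \<beta> * c)"
    using hpc \<rho>c by (intro continuous_on_add continuous_on_diff continuous_on_const)
  have kC: "C1_on a b k" and dk0: "\<And>x. x \<in> {a..b} \<Longrightarrow> dC1 a b k x = hp x - \<rho> x + \<beta> * c"
    using C1_intro[OF kcd kder] by auto
  have dk: "dC1 a b k x = T (hp x) + \<beta> * c" if "x \<in> {a..b}" for x using dk0[OF that] by (simp add: \<rho>_def)
  have Da0: "D a = 0" by (simp add: D_def)
  have iabs: "(\<lambda>x. \<bar>\<rho> x\<bar>) integrable_on {a..b}" by (intro ci continuous_intros \<rho>c)
  have Dbound: "\<bar>D x\<bar> \<le> E" if x: "x \<in> {a..b}" for x
  proof -
    have sub: "{a..x} \<subseteq> {a..b}" using x by auto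
    have c1: "continuous_on {a..x} \<rho>" using continuous_on_subset[OF \<rho>c sub] .
    have "norm (integral {a..x} \<rho>) \<le> integral {a..x} (\<lambda>x. \<bar>\<rho> x\<bar>)"
      by (rule integral_norm_bound_integral) (auto intro!: integrable_continuous_interval continuous_intros c1)
    then have "\<bar>D x\<bar> \<le> integral {a..x} (\<lambda>x. \<bar>\<rho> x\<bar>)" by (simp add: D_def)
    also have "\<dots> \<le> E" unfolding E_def
      by (rule integral_subset_le[OF sub]) (auto intro!: integrable_continuous_interval continuous_intros c1 iabs)
    finally show ?thesis .
  qed
  have E0: "0 \<le> E" unfolding E_def by (rule integral_nonneg[OF iabs]) simp
  have clip: "2 * M * \<bar>\<rho> x\<bar> \<le> (hp x)\<^sup>2 - (T (hp x))\<^sup>2" for x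
    unfolding \<rho>_def T_def using clip_ineq[OF Mpos] .
  have Tb: "\<bar>T y\<bar> \<le> M" for y using Mpos by (simp add: T_def)
  have iT2: "(\<lambda>x. (T (hp x))\<^sup>2) integrable_on {a..b}" by (intro ci continuous_intros Tc)
  have ihp2: "(\<lambda>x. (hp x)\<^sup>2) integrable_on {a..b}" by (intro ci continuous_intros hpc)
  have G1: "2 * M * E \<le> integral {a..b} (\<lambda>x. (hp x)\<^sup>2 - (T (hp x))\<^sup>2)"
  proof -
    have "2 * M * E = integral {a..b} (\<lambda>x. 2 * M * \<bar>\<rho> x\<bar>)" by (simp add: E_def)
    also have "\<dots> \<le> integral {a..b} (\<lambda>x. (hp x)\<^sup>2 - (T (hp x))\<^sup>2)"
      by (rule integral_le) (auto intro!: ci continuous_intros \<rho>c hpc Tc clip)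
    finally show ?thesis .
  qed
  have "integral {a..b} (\<lambda>x. (hp x)\<^sup>2 - (T (hp x))\<^sup>2) \<le> integral {a..b} (\<lambda>x. (hp x)\<^sup>2)"
    by (rule integral_le) (auto intro!: ci continuous_intros hpc Tc)
  then have G2: "2 * M * E \<le> M * \<delta>" using G1 Qle by (simp add: hp_def)
  have energy: "integral {a..b} (\<lambda>x. (dC1 a b k x)\<^sup>2) \<le> integral {a..b} (\<lambda>x. (T (hp x))\<^sup>2)"
  proof (cases "Da \<and> Db")
    case False
    then have b0: "\<beta> = 0" by (simp add: \<beta>_def)
    have "integral {a..b} (\<lambda>x. (dC1 a b k x)\<^sup>2) = integral {a..b} (\<lambda>x. (T (hp x))\<^sup>2)"
      by (intro integral_cong) (simp add: dk b0)
    then show ?thesis by simp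
  next
    case True
    then have h0: "h a = 0" "h b = 0" and b1: "\<beta> = 1" using ha hb by (auto simp: \<beta>_def)
    have "(hp has_integral (h b - h a)) {a..b}"
      using ab hpd by (intro fundamental_theorem_of_calculus) (auto simp: has_real_derivative_iff_has_vector_derivative)
    then have ihp: "integral {a..b} hp = 0" using h0 by (simp add: integral_unique)
    have "integral {a..b} (\<lambda>x. T (hp x)) = integral {a..b} (\<lambda>x. hp x - \<rho> x)" by (simp add: \<rho>_def)
    also have "\<dots> = integral {a..b} hp - D b" unfolding D_def
      by (rule integral_diff) (auto intro!: ci hpc \<rho>c)
    finally have iT: "integral {a..b} (\<lambda>x. T (hp x)) = - (c * L)" using ihp Lpos by (simp add: c_def)
    have iTc: "(\<lambda>x. 2 * c * T (hp x)) integrable_on {a..b}" by (intro ci continuous_intros Tc)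
    have icc: "(\<lambda>x. c\<^sup>2) integrable_on {a..b}" by (intro ci continuous_intros)
    have "integral {a..b} (\<lambda>x. (dC1 a b k x)\<^sup>2) = integral {a..b} (\<lambda>x. (T (hp x))\<^sup>2 + 2 * c * T (hp x) + c\<^sup>2)"
      by (intro integral_cong) (simp add: dk b1 power2_eq_square algebra_simps)
    also have "\<dots> = integral {a..b} (\<lambda>x. (T (hp x))\<^sup>2) + 2 * c * integral {a..b} (\<lambda>x. T (hp x)) + c\<^sup>2 * L"
      using integral_add[OF integrable_add[OF iT2 iTc] icc] integral_add[OF iT2 iTc] ab
      by (simp add: L_def)
    also have "\<dots> = integral {a..b} (\<lambda>x. (T (hp x))\<^sup>2) - c\<^sup>2 * L" using iT by (simp add: power2_eq_square algebra_simps)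
    also have "\<dots> \<le> integral {a..b} (\<lambda>x. (T (hp x))\<^sup>2)" using Lpos by simp
    finally show ?thesis .
  qed
  have idk2: "(\<lambda>x. (dC1 a b k x)\<^sup>2) integrable_on {a..b}"
    using C1_dC1(1)[OF kC] by (intro ci continuous_intros)
  have G3: "2 * M * E \<le> integral {a..b} (\<lambda>x. (dC1 a b h x)\<^sup>2 - (dC1 a b k x)\<^sup>2)"
    using G1 energy integral_diff[OF ihp2 idk2] integral_diff[OF ihp2 iT2] by (simp add: hp_def)
  have cb: "\<bar>c\<bar> \<le> E / L" using Dbound[of b] ab Lpos by (simp add: c_def abs_div divide_right_mono)
  have dkb: "\<bar>dC1 a b k x\<bar> \<le> M + E / (b - a)" if x: "x \<in> {a..b}" for x
  proof -
    have "\<bar>\<beta> * c\<bar> \<le> \<bar>c\<bar>" by (simp add: \<beta>_def)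
    then show ?thesis using dk[OF x] Tb[of "hp x"] cb by (simp add: L_def abs_le_iff) linarith
  qed
  have hkb: "\<bar>h x - k x\<bar> \<le> 2 * E" if x: "x \<in> {a..b}" for x
  proof -
    have corr: "\<bar>\<alpha> * D b + \<beta> * c * (x - a)\<bar> \<le> \<bar>D b\<bar>"
    proof (cases "Da \<and> Db")
      case True
      then have eq: "\<alpha> * D b + \<beta> * c * (x - a) = D b * ((x - a) / L)" by (simp add: \<alpha>_def \<beta>_def c_def)
      have q0: "0 \<le> (x - a) / L" and q1: "(x - a) / L \<le> 1" using x Lpos by (auto simp: L_def)
      have "\<bar>D b * ((x - a) / L)\<bar> = \<bar>D b\<bar> * ((x - a) / L)" by (simp only: abs_mult abs_of_nonneg[OF q0])
      also have "\<dots> \<le> \<bar>D b\<bar> * 1" using q1 by (intro mult_left_mono) auto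
      finally show ?thesis using eq by simp
    next
      case False
      then show ?thesis by (auto simp: \<alpha>_def \<beta>_def)
    qed
    have "h x - k x = D x - (\<alpha> * D b + \<beta> * c * (x - a))" by (simp add: k_def)
    then show ?thesis using Dbound[OF x] Dbound[of b] ab corr by (simp add: abs_le_iff) linarith
  qed
  have ka: "Da \<longrightarrow> k a = 0" using ha Da0 by (simp add: k_def \<alpha>_def)
  have kb: "Db \<longrightarrow> k b = 0"
  proof
    assume Db
    show "k b = 0"
    proof (cases Da)
      case True then show ?thesis using hb \<open>Db\<close> Lpos by (simp add: k_def \<alpha>_def \<beta>_def c_def L_def)
    next
      case False then show ?thesis using hb \<open>Db\<close> by (simp add: k_def \<alpha>_def \<beta>_def)
    qed
  qed
  show ?thesis using that[OF kC ka kb hkb dkb G3 E0 G2] .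
qed

end

lemma mvt_est:
  fixes g G :: "real \<Rightarrow> real"
  assumes gd: "\<And>x. (g has_real_derivative G x) (at x)"
    and close: "\<And>t. min y z \<le> t \<Longrightarrow> t \<le> max y z \<Longrightarrow> \<bar>G t - c\<bar> \<le> \<eta>"
  shows "\<bar>g y - g z - c * (y - z)\<bar> \<le> \<eta> * \<bar>y - z\<bar>"
proof -
  have main: "\<bar>g q - g p - c * (q - p)\<bar> \<le> \<eta> * (p - q)"
    if pq: "q < p" and cl: "\<And>t. q \<le> t \<Longrightarrow> t \<le> p \<Longrightarrow> \<bar>G t - c\<bar> \<le> \<eta>" for p q
  proof -
    obtain t where t: "q < t" "t < p" "g p - g q = (p - q) * G t"
      using MVT2[OF pq, of g G] gd by blast
    have "g q - g p - c * (q - p) = (p - q) * (c - G t)" using t(3) by (simp add: algebra_simps)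
    then have "\<bar>g q - g p - c * (q - p)\<bar> = (p - q) * \<bar>G t - c\<bar>" using pq by (simp add: abs_mult)
    also have "\<dots> \<le> (p - q) * \<eta>" using cl[of t] t pq by (intro mult_left_mono) auto
    finally show ?thesis by (simp add: mult.commute)
  qed
  consider "y < z" | "y = z" | "z < y" by linarith
  then show ?thesis
  proof cases
    case 1 then show ?thesis using main[of y z] close by (auto simp: abs_minus_commute)
  next
    case 2 then show ?thesis by simp
  next
    case 3
    have "\<bar>g z - g y - c * (z - y)\<bar> \<le> \<eta> * (y - z)" using main[of z y] close 3 by auto
    moreover have "\<bar>g z - g y - c * (z - y)\<bar> = \<bar>g y - g z - c * (y - z)\<bar>" by (simp add: abs_minus_commute algebra_simps)
    ultimately show ?thesis using 3 by simp
  qed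
qed


context
  fixes a b K :: real and g G u0 :: "real \<Rightarrow> real" and Da Db :: bool and \<epsilon> :: real
  assumes ab: "a < b"
    and gd: "\<And>x. (g has_real_derivative G x) (at x)"
    and Gc: "continuous_on UNIV G"
    and u0C: "C1_on a b u0"
    and epos: "\<epsilon> > 0"
    and wm: "\<And>v. v \<in> admissible a b Da Db u0 \<Longrightarrow> C1norm a b (\<lambda>x. v x - u0 x) < \<epsilon> \<Longrightarrow>
               Phi a b K g v \<ge> Phi a b K g u0"
begin

lemma gc: "continuous_on S g"
  using gd DERIV_continuous continuous_at_imp_continuous_on by blast

lemma gcomp: "continuous_on {a..b} v \<Longrightarrow> continuous_on {a..b} (\<lambda>x. g (v x))"
  using continuous_on_compose2[OF gc, of "{a..b}" v UNIV] by auto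

lemma Gcomp: "continuous_on {a..b} v \<Longrightarrow> continuous_on {a..b} (\<lambda>x. G (v x))"
  using continuous_on_compose2[OF Gc, of "{a..b}" v] by auto

lemma UC:
  assumes "\<eta> > 0"
  obtains r where "r > 0"
    "\<And>x y z. x \<in> {a..b} \<Longrightarrow> \<bar>y - u0 x\<bar> \<le> r \<Longrightarrow> \<bar>z - u0 x\<bar> \<le> r \<Longrightarrow>
        \<bar>g y - g z - G (u0 x) * (y - z)\<bar> \<le> \<eta> * \<bar>y - z\<bar>"
proof -
  define C where "C = supnorm a b u0"
  have uC: "\<bar>u0 x\<bar> \<le> C" if "x \<in> {a..b}" for x
    using supnorm_ge[OF ab C1_cont[OF ab u0C] that] C_def by simp
  have "uniformly_continuous_on (cball 0 (C+1)) G"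
    by (rule compact_uniformly_continuous) (use Gc continuous_on_subset in auto)
  then obtain d where d: "d > 0" "\<forall>x\<in>cball 0 (C+1). \<forall>x'\<in>cball 0 (C+1). dist x' x < d \<longrightarrow> dist (G x') (G x) < \<eta>"
    unfolding uniformly_continuous_on_def using assms by metis
  define r where "r = min 1 (d/2)"
  have "r > 0" using d by (simp add: r_def)
  moreover have "\<bar>g y - g z - G (u0 x) * (y - z)\<bar> \<le> \<eta> * \<bar>y - z\<bar>"
    if x: "x \<in> {a..b}" and y: "\<bar>y - u0 x\<bar> \<le> r" and z: "\<bar>z - u0 x\<bar> \<le> r" for x y z
  proof (rule mvt_est[of g G])
    show "(g has_real_derivative G t) (at t)" for t by (rule gd)
    fix t assume "min y z \<le> t" "t \<le> max y z"
    then have t: "\<bar>t - u0 x\<bar> \<le> r" using y z by (auto simp: abs_le_iff min_def max_def split: if_splits)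
    have r1: "r \<le> 1" "r \<le> d/2" by (auto simp: r_def)
    have "u0 x \<in> cball 0 (C+1)" using uC[OF x] by (simp add: dist_real_def)
    moreover have "t \<in> cball 0 (C+1)" using uC[OF x] t r1 by (simp add: dist_real_def abs_le_iff)
    moreover have "dist t (u0 x) < d" using t r1 d by (simp add: dist_real_def)
    ultimately have "dist (G t) (G (u0 x)) < \<eta>" using d by blast
    then show "\<bar>G t - G (u0 x)\<bar> \<le> \<eta>" by (simp add: dist_real_def)
  qed
  ultimately show ?thesis using that by blast
qed



lemma Phi_diff:
  assumes "C1_on a b v1" "C1_on a b v2"
  shows "Phi a b K g v1 - Phi a b K g v2 = integral {a..b}
     (\<lambda>x. ((dC1 a b v1 x - K)\<^sup>2 + g (v1 x)) - ((dC1 a b v2 x - K)\<^sup>2 + g (v2 x)))"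
  unfolding Phi_def
  using C1_dC1(1)[OF ab assms(1)] C1_dC1(1)[OF ab assms(2)] C1_cont[OF ab assms(1)] C1_cont[OF ab assms(2)]
  by (intro integral_diff[symmetric] ci continuous_intros gcomp)

lemma EL_ge:
  assumes wC: "C1_on a b w" and wa: "Da \<longrightarrow> w a = 0" and wb: "Db \<longrightarrow> w b = 0"
  shows "0 \<le> integral {a..b} (\<lambda>x. 2 * (dC1 a b u0 x - K) * dC1 a b w x + G (u0 x) * w x)" (is "0 \<le> ?L")
proof (rule ccontr)
  assume "\<not> 0 \<le> ?L" then have Lneg: "?L < 0" by simp
  note u0d = C1_dC1[OF ab u0C] and wd = C1_dC1[OF ab wC]
  have u0c: "continuous_on {a..b} u0" and wc: "continuous_on {a..b} w" using C1_cont[OF ab] u0C wC by auto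
  define W where "W = integral {a..b} (\<lambda>x. \<bar>w x\<bar>) + 1"
  define B where "B = integral {a..b} (\<lambda>x. (dC1 a b w x)\<^sup>2) + 1"
  define Sw where "Sw = supnorm a b w + supnorm a b (dC1 a b w) + 1"
  have "0 \<le> integral {a..b} (\<lambda>x. \<bar>w x\<bar>)"
    by (rule integral_nonneg) (auto intro!: ci continuous_intros wc)
  then have Wpos: "W > 0" by (simp add: W_def)
  have "0 \<le> integral {a..b} (\<lambda>x. (dC1 a b w x)\<^sup>2)"
    by (rule integral_nonneg) (auto intro!: ci continuous_intros wd(1))
  then have Bpos: "B > 0" by (simp add: B_def)
  have sw0: "0 \<le> supnorm a b w" using supnorm_ge[OF ab wc, of a] ab by simp
  have sw1: "0 \<le> supnorm a b (dC1 a b w)" using supnorm_ge[OF ab wd(1), of a] ab by simp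
  have Swpos: "Sw > 0" using sw0 sw1 by (simp add: Sw_def)
  define \<eta> where "\<eta> = - ?L / (3 * W)"
  have "?L / (3 * W) < 0" using Lneg Wpos by (intro divide_neg_pos) auto
  then have etapos: "\<eta> > 0" by (simp add: \<eta>_def)
  have etaW: "\<eta> * W = - ?L / 3" using Wpos by (simp add: \<eta>_def)
  obtain r where r: "r > 0" and rUC: "\<And>x y z. x \<in> {a..b} \<Longrightarrow> \<bar>y - u0 x\<bar> \<le> r \<Longrightarrow> \<bar>z - u0 x\<bar> \<le> r \<Longrightarrow>
        \<bar>g y - g z - G (u0 x) * (y - z)\<bar> \<le> \<eta> * \<bar>y - z\<bar>"
    using UC[OF etapos] by blast
  define t where "t = min (\<epsilon> / (2 * Sw)) (min (r / Sw) (- ?L / (3 * B)))"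
  have "?L / (3 * B) < 0" using Lneg Bpos by (intro divide_neg_pos) auto
  then have tpos: "t > 0" using epos Swpos r by (auto simp: t_def intro!: divide_pos_pos)
  have "t \<le> \<epsilon> / (2 * Sw)" by (simp add: t_def)
  then have t1: "t * Sw \<le> \<epsilon> / 2" using Swpos by (simp add: field_simps)
  have "t \<le> r / Sw" by (simp add: t_def)
  then have t2: "t * Sw \<le> r" using Swpos by (simp add: field_simps)
  have "t \<le> - ?L / (3 * B)" by (simp add: t_def)
  then have t3: "t * B \<le> - ?L / 3" using Bpos by (simp add: field_simps)
  define v where "v = (\<lambda>x. u0 x + t * w x)"
  have vder: "(v has_real_derivative dC1 a b u0 x + t * dC1 a b w x) (at x within {a..b})" if "x \<in> {a..b}" for x
    unfolding v_def by (auto intro!: derivative_eq_intros u0d(2) wd(2) that)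
  have vcd: "continuous_on {a..b} (\<lambda>x. dC1 a b u0 x + t * dC1 a b w x)"
    by (intro continuous_intros u0d(1) wd(1))
  have vC: "C1_on a b v" and dv: "\<And>x. x \<in> {a..b} \<Longrightarrow> dC1 a b v x = dC1 a b u0 x + t * dC1 a b w x"
    using C1_intro[OF ab vcd vder] by auto
  have vA: "v \<in> admissible a b Da Db u0" using vC wa wb by (simp add: admissible_def v_def)
  define hw where "hw = (\<lambda>x. t * w x)"
  have hweq: "(\<lambda>x. v x - u0 x) = hw" by (simp add: v_def hw_def)
  have hwder: "(hw has_real_derivative t * dC1 a b w x) (at x within {a..b})" if "x \<in> {a..b}" for x
    unfolding hw_def by (auto intro!: derivative_eq_intros wd(2) that)
  have hwcd: "continuous_on {a..b} (\<lambda>x. t * dC1 a b w x)" by (intro continuous_intros wd(1))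
  have dhw: "\<And>x. x \<in> {a..b} \<Longrightarrow> dC1 a b hw x = t * dC1 a b w x"
    using C1_intro[OF ab hwcd hwder] by auto
  have wle: "\<bar>w x\<bar> \<le> supnorm a b w" if "x \<in> {a..b}" for x using supnorm_ge[OF ab wc that] .
  have wdle: "\<bar>dC1 a b w x\<bar> \<le> supnorm a b (dC1 a b w)" if "x \<in> {a..b}" for x using supnorm_ge[OF ab wd(1) that] .
  have "supnorm a b hw \<le> t * supnorm a b w"
    using tpos wle by (intro supnorm_le[OF ab]) (auto simp: hw_def abs_mult intro: mult_left_mono)
  moreover have "supnorm a b (dC1 a b hw) \<le> t * supnorm a b (dC1 a b w)"
    using tpos wdle by (intro supnorm_le[OF ab]) (auto simp: dhw abs_mult intro: mult_left_mono)
  ultimately have "C1norm a b hw \<le> t * (Sw - 1)" by (simp add: C1norm_def Sw_def algebra_simps)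
  also have "\<dots> < \<epsilon>" using t1 tpos epos by (simp add: algebra_simps)
  finally have "Phi a b K g v \<ge> Phi a b K g u0" using wm[OF vA] hweq by simp
  moreover
  have "Phi a b K g v - Phi a b K g u0 = integral {a..b}
     (\<lambda>x. ((dC1 a b v x - K)\<^sup>2 + g (v x)) - ((dC1 a b u0 x - K)\<^sup>2 + g (u0 x)))"
    by (rule Phi_diff[OF vC u0C])
  also have "\<dots> = integral {a..b}
     (\<lambda>x. ((dC1 a b u0 x + t * dC1 a b w x - K)\<^sup>2 + g (u0 x + t * w x)) - ((dC1 a b u0 x - K)\<^sup>2 + g (u0 x)))"
  proof (rule integral_cong)
    fix x assume "x \<in> {a..b}"
    then show "((dC1 a b v x - K)\<^sup>2 + g (v x)) - ((dC1 a b u0 x - K)\<^sup>2 + g (u0 x)) =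
      ((dC1 a b u0 x + t * dC1 a b w x - K)\<^sup>2 + g (u0 x + t * w x)) - ((dC1 a b u0 x - K)\<^sup>2 + g (u0 x))"
      using dv[of x] by (simp add: v_def)
  qed
  also have "\<dots> \<le> integral {a..b} (\<lambda>x. t * (2 * (dC1 a b u0 x - K) * dC1 a b w x + G (u0 x) * w x)
        + t\<^sup>2 * (dC1 a b w x)\<^sup>2 + \<eta> * t * \<bar>w x\<bar>)"
  proof (rule integral_le)
    show "(\<lambda>x. ((dC1 a b u0 x + t * dC1 a b w x - K)\<^sup>2 + g (u0 x + t * w x)) - ((dC1 a b u0 x - K)\<^sup>2 + g (u0 x))) integrable_on {a..b}"
      using u0d(1) wd(1) u0c wc by (intro ci continuous_intros gcomp)
    show "(\<lambda>x. t * (2 * (dC1 a b u0 x - K) * dC1 a b w x + G (u0 x) * w x)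
        + t\<^sup>2 * (dC1 a b w x)\<^sup>2 + \<eta> * t * \<bar>w x\<bar>) integrable_on {a..b}"
      using u0d(1) wd(1) u0c wc by (intro ci continuous_intros Gcomp)
    fix x assume x: "x \<in> {a..b}"
    have "\<bar>t * w x\<bar> \<le> r" using wle[OF x] t2 tpos sw1
      by (simp add: abs_mult) (smt (verit) Sw_def mult_left_mono)
    then have e: "\<bar>g (u0 x + t * w x) - g (u0 x) - G (u0 x) * (t * w x)\<bar> \<le> \<eta> * \<bar>t * w x\<bar>"
      using rUC[OF x, of "u0 x + t * w x" "u0 x"] r by simp
    have e2: "\<bar>g (u0 x + t * w x) - g (u0 x) - G (u0 x) * (t * w x)\<bar> \<le> \<eta> * t * \<bar>w x\<bar>"
      using e tpos by (simp add: abs_mult mult.assoc)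
    show "((dC1 a b u0 x + t * dC1 a b w x - K)\<^sup>2 + g (u0 x + t * w x)) - ((dC1 a b u0 x - K)\<^sup>2 + g (u0 x))
       \<le> t * (2 * (dC1 a b u0 x - K) * dC1 a b w x + G (u0 x) * w x)
        + t\<^sup>2 * (dC1 a b w x)\<^sup>2 + \<eta> * t * \<bar>w x\<bar>"
      using e2 by (simp add: power2_eq_square algebra_simps abs_le_iff)
  qed
  also have "\<dots> = t * ?L + t\<^sup>2 * (B - 1) + \<eta> * t * (W - 1)"
  proof -
    have i1: "(\<lambda>x. t * (2 * (dC1 a b u0 x - K) * dC1 a b w x + G (u0 x) * w x)) integrable_on {a..b}"
      using u0d(1) wd(1) u0c wc by (intro ci continuous_intros Gcomp)
    have i2: "(\<lambda>x. t\<^sup>2 * (dC1 a b w x)\<^sup>2) integrable_on {a..b}"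
      using u0d(1) wd(1) u0c wc by (intro ci continuous_intros Gcomp)
    have i3: "(\<lambda>x. \<eta> * t * \<bar>w x\<bar>) integrable_on {a..b}"
      using u0d(1) wd(1) u0c wc by (intro ci continuous_intros Gcomp)
    show ?thesis
      using integral_add[OF integrable_add[OF i1 i2] i3] integral_add[OF i1 i2]
      by (simp add: B_def W_def)
  qed
  also have "\<dots> < t * ?L + t * (t * B) + t * (\<eta> * W)"
    using tpos etapos by (simp add: power2_eq_square algebra_simps add_pos_pos)
  also have "\<dots> \<le> t * ?L + t * (- ?L / 3) + t * (- ?L / 3)"
    using t3 etaW tpos by (intro add_mono mult_left_mono) auto
  also have "\<dots> = (t * ?L) / 3" by (simp add: field_simps)
  also have "\<dots> < 0" using mult_pos_neg[OF tpos Lneg] by simp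
  finally show False by linarith
qed


lemma EL:
  assumes wC: "C1_on a b w" and wa: "Da \<longrightarrow> w a = 0" and wb: "Db \<longrightarrow> w b = 0"
  shows "integral {a..b} (\<lambda>x. 2 * (dC1 a b u0 x - K) * dC1 a b w x + G (u0 x) * w x) = 0" (is "?L = 0")
proof -
  note wd = C1_dC1[OF ab wC]
  have nder: "((\<lambda>x. - w x) has_real_derivative - dC1 a b w x) (at x within {a..b})" if "x \<in> {a..b}" for x
    by (auto intro!: derivative_eq_intros wd(2) that)
  have ncd: "continuous_on {a..b} (\<lambda>x. - dC1 a b w x)" by (intro continuous_intros wd(1))
  have nC: "C1_on a b (\<lambda>x. - w x)" and dn: "\<And>x. x \<in> {a..b} \<Longrightarrow> dC1 a b (\<lambda>x. - w x) x = - dC1 a b w x"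
    using C1_intro[OF ab ncd nder] by auto
  have "0 \<le> integral {a..b} (\<lambda>x. 2 * (dC1 a b u0 x - K) * dC1 a b (\<lambda>x. - w x) x + G (u0 x) * (- w x))"
    using EL_ge[OF nC] wa wb by simp
  also have "\<dots> = integral {a..b} (\<lambda>x. - (2 * (dC1 a b u0 x - K) * dC1 a b w x + G (u0 x) * w x))"
    by (rule integral_cong) (simp add: dn)
  also have "\<dots> = - ?L" by (rule integral_neg)
  finally show ?thesis using EL_ge[OF wC wa wb] by linarith
qed

lemma CMP:
  assumes v1C: "C1_on a b v1" and v2C: "C1_on a b v2"
    and ba: "Da \<longrightarrow> v1 a = v2 a" and bb: "Db \<longrightarrow> v1 b = v2 b"
    and rUC: "\<And>x y z. x \<in> {a..b} \<Longrightarrow> \<bar>y - u0 x\<bar> \<le> r \<Longrightarrow> \<bar>z - u0 x\<bar> \<le> r \<Longrightarrow>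
        \<bar>g y - g z - G (u0 x) * (y - z)\<bar> \<le> \<eta> * \<bar>y - z\<bar>"
    and c1: "\<And>x. x \<in> {a..b} \<Longrightarrow> \<bar>v1 x - u0 x\<bar> \<le> r"
    and c2: "\<And>x. x \<in> {a..b} \<Longrightarrow> \<bar>v2 x - u0 x\<bar> \<le> r"
  shows "Phi a b K g v1 - Phi a b K g v2 \<ge>
     integral {a..b} (\<lambda>x. (dC1 a b v1 x - dC1 a b u0 x)\<^sup>2 - (dC1 a b v2 x - dC1 a b u0 x)\<^sup>2)
     - \<eta> * integral {a..b} (\<lambda>x. \<bar>v1 x - v2 x\<bar>)"
proof -
  note d1 = C1_dC1[OF ab v1C] and d2 = C1_dC1[OF ab v2C] and u0d = C1_dC1[OF ab u0C]
  have c1c: "continuous_on {a..b} v1" and c2c: "continuous_on {a..b} v2" and u0c: "continuous_on {a..b} u0"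
    using C1_cont[OF ab] v1C v2C u0C by auto
  define w where "w = (\<lambda>x. v1 x - v2 x)"
  have wder: "(w has_real_derivative dC1 a b v1 x - dC1 a b v2 x) (at x within {a..b})" if "x \<in> {a..b}" for x
    unfolding w_def by (auto intro!: derivative_eq_intros d1(2) d2(2) that)
  have wcd: "continuous_on {a..b} (\<lambda>x. dC1 a b v1 x - dC1 a b v2 x)" by (intro continuous_intros d1(1) d2(1))
  have wC: "C1_on a b w" and dw: "\<And>x. x \<in> {a..b} \<Longrightarrow> dC1 a b w x = dC1 a b v1 x - dC1 a b v2 x"
    using C1_intro[OF ab wcd wder] by auto
  have EL1: "integral {a..b} (\<lambda>x. 2 * (dC1 a b u0 x - K) * dC1 a b w x + G (u0 x) * w x) = 0"
    using EL[OF wC] ba bb by (simp add: w_def)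
  have "integral {a..b} (\<lambda>x. 2 * (dC1 a b u0 x - K) * dC1 a b w x + G (u0 x) * w x) =
    integral {a..b} (\<lambda>x. 2 * (dC1 a b u0 x - K) * (dC1 a b v1 x - dC1 a b v2 x) + G (u0 x) * (v1 x - v2 x))"
  proof (rule integral_cong)
    fix x assume "x \<in> {a..b}"
    then show "2 * (dC1 a b u0 x - K) * dC1 a b w x + G (u0 x) * w x =
      2 * (dC1 a b u0 x - K) * (dC1 a b v1 x - dC1 a b v2 x) + G (u0 x) * (v1 x - v2 x)"
      using dw[of x] by (simp add: w_def)
  qed
  then have EL0: "integral {a..b} (\<lambda>x. 2 * (dC1 a b u0 x - K) * (dC1 a b v1 x - dC1 a b v2 x) + G (u0 x) * (v1 x - v2 x)) = 0"
    using EL1 by simp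
  have iA: "(\<lambda>x. (dC1 a b v1 x - dC1 a b u0 x)\<^sup>2 - (dC1 a b v2 x - dC1 a b u0 x)\<^sup>2) integrable_on {a..b}"
    using d1(1) d2(1) u0d(1) by (intro ci continuous_intros)
  have iL: "(\<lambda>x. 2 * (dC1 a b u0 x - K) * (dC1 a b v1 x - dC1 a b v2 x) + G (u0 x) * (v1 x - v2 x)) integrable_on {a..b}"
    using d1(1) d2(1) u0d(1) c1c c2c u0c by (intro ci continuous_intros Gcomp)
  have iE: "(\<lambda>x. \<eta> * \<bar>v1 x - v2 x\<bar>) integrable_on {a..b}"
    using c1c c2c by (intro ci continuous_intros)
  have "integral {a..b} (\<lambda>x. (dC1 a b v1 x - dC1 a b u0 x)\<^sup>2 - (dC1 a b v2 x - dC1 a b u0 x)\<^sup>2)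
     - \<eta> * integral {a..b} (\<lambda>x. \<bar>v1 x - v2 x\<bar>)
     = integral {a..b} (\<lambda>x. ((dC1 a b v1 x - dC1 a b u0 x)\<^sup>2 - (dC1 a b v2 x - dC1 a b u0 x)\<^sup>2
        + (2 * (dC1 a b u0 x - K) * (dC1 a b v1 x - dC1 a b v2 x) + G (u0 x) * (v1 x - v2 x)))
        - \<eta> * \<bar>v1 x - v2 x\<bar>)"
    using integral_diff[OF integrable_add[OF iA iL] iE] integral_add[OF iA iL] EL0 by simp
  also have "\<dots> \<le> integral {a..b}
     (\<lambda>x. ((dC1 a b v1 x - K)\<^sup>2 + g (v1 x)) - ((dC1 a b v2 x - K)\<^sup>2 + g (v2 x)))"
  proof (rule integral_le)
    show "(\<lambda>x. ((dC1 a b v1 x - dC1 a b u0 x)\<^sup>2 - (dC1 a b v2 x - dC1 a b u0 x)\<^sup>2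
        + (2 * (dC1 a b u0 x - K) * (dC1 a b v1 x - dC1 a b v2 x) + G (u0 x) * (v1 x - v2 x)))
        - \<eta> * \<bar>v1 x - v2 x\<bar>) integrable_on {a..b}"
      by (intro integrable_diff integrable_add iA iL iE)
    show "(\<lambda>x. ((dC1 a b v1 x - K)\<^sup>2 + g (v1 x)) - ((dC1 a b v2 x - K)\<^sup>2 + g (v2 x))) integrable_on {a..b}"
      using d1(1) d2(1) c1c c2c by (intro ci continuous_intros gcomp)
    fix x assume x: "x \<in> {a..b}"
    have e: "\<bar>g (v1 x) - g (v2 x) - G (u0 x) * (v1 x - v2 x)\<bar> \<le> \<eta> * \<bar>v1 x - v2 x\<bar>"
      using rUC[OF x c1[OF x] c2[OF x]] .
    show "((dC1 a b v1 x - dC1 a b u0 x)\<^sup>2 - (dC1 a b v2 x - dC1 a b u0 x)\<^sup>2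
        + (2 * (dC1 a b u0 x - K) * (dC1 a b v1 x - dC1 a b v2 x) + G (u0 x) * (v1 x - v2 x)))
        - \<eta> * \<bar>v1 x - v2 x\<bar> \<le> ((dC1 a b v1 x - K)\<^sup>2 + g (v1 x)) - ((dC1 a b v2 x - K)\<^sup>2 + g (v2 x))"
      using e by (simp add: power2_eq_square algebra_simps abs_le_iff)
  qed
  also have "\<dots> = Phi a b K g v1 - Phi a b K g v2" by (rule Phi_diff[OF v1C v2C, symmetric])
  finally show ?thesis .
qed


lemma main_ctx:
  "\<exists>\<delta>>0. \<forall>v\<in>admissible a b Da Db u0. supnorm a b (\<lambda>x. v x - u0 x) < \<delta> \<longrightarrow> Phi a b K g v \<ge> Phi a b K g u0"
proof -
  define L where "L = b - a"
  have Lpos: "L > 0" using ab by (simp add: L_def)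
  define M where "M = \<epsilon> / 4"
  have Mpos: "M > 0" using epos by (simp add: M_def)
  define \<eta> where "\<eta> = M / L"
  have etapos: "\<eta> > 0" using Mpos Lpos by (simp add: \<eta>_def)
  have etaL: "\<eta> * L = M" using Lpos by (simp add: \<eta>_def)
  obtain r where rpos: "r > 0" and rUC: "\<And>x y z. x \<in> {a..b} \<Longrightarrow> \<bar>y - u0 x\<bar> \<le> r \<Longrightarrow> \<bar>z - u0 x\<bar> \<le> r \<Longrightarrow>
        \<bar>g y - g z - G (u0 x) * (y - z)\<bar> \<le> \<eta> * \<bar>y - z\<bar>"
    using UC[OF etapos] by blast
  define \<delta> where "\<delta> = min (r / 2) (\<epsilon> / (2 * (2 + 1 / L)))"
  have c2L: "2 + 1 / L > 0" using Lpos by (simp add: add_pos_pos)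
  have dpos: "\<delta> > 0" using rpos epos c2L by (simp add: \<delta>_def)
  have d1: "2 * \<delta> \<le> r" by (simp add: \<delta>_def)
  have "\<delta> \<le> \<epsilon> / (2 * (2 + 1 / L))" by (simp add: \<delta>_def)
  then have "\<delta> * (2 + 1 / L) \<le> \<epsilon> / 2" using c2L by (simp add: field_simps)
  then have d2: "2 * \<delta> + \<delta> / L \<le> \<epsilon> / 2" by (simp add: algebra_simps)
  have main: "Phi a b K g v \<ge> Phi a b K g u0"
    if vA: "v \<in> admissible a b Da Db u0" and vs: "supnorm a b (\<lambda>x. v x - u0 x) < \<delta>" for v
  proof -
    have vC: "C1_on a b v" and va: "Da \<longrightarrow> v a = u0 a" and vb: "Db \<longrightarrow> v b = u0 b"
      using vA by (auto simp: admissible_def)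
    note vd = C1_dC1[OF ab vC] and u0d = C1_dC1[OF ab u0C]
    define h where "h = (\<lambda>x. v x - u0 x)"
    have hder: "(h has_real_derivative dC1 a b v x - dC1 a b u0 x) (at x within {a..b})" if "x \<in> {a..b}" for x
      unfolding h_def by (auto intro!: derivative_eq_intros vd(2) u0d(2) that)
    have hcd: "continuous_on {a..b} (\<lambda>x. dC1 a b v x - dC1 a b u0 x)" by (intro continuous_intros vd(1) u0d(1))
    have hC: "C1_on a b h" and dh: "\<And>x. x \<in> {a..b} \<Longrightarrow> dC1 a b h x = dC1 a b v x - dC1 a b u0 x"
      using C1_intro[OF ab hcd hder] by auto
    have hc: "continuous_on {a..b} h" using C1_cont[OF ab hC] .
    have hbd: "\<bar>h x\<bar> \<le> \<delta>" if "x \<in> {a..b}" for x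
      using supnorm_ge[OF ab hc that] vs by (simp add: h_def)
    have ha: "Da \<longrightarrow> h a = 0" and hb: "Db \<longrightarrow> h b = 0" using va vb by (auto simp: h_def)
    have close1: "\<bar>v x - u0 x\<bar> \<le> r" if "x \<in> {a..b}" for x
      using hbd[OF that] d1 dpos by (simp add: h_def)
    define Q where "Q = integral {a..b} (\<lambda>x. (dC1 a b h x)\<^sup>2)"
    show ?thesis
    proof (cases "Q \<ge> M * \<delta>")
      case True
      have "Phi a b K g v - Phi a b K g u0 \<ge>
         integral {a..b} (\<lambda>x. (dC1 a b v x - dC1 a b u0 x)\<^sup>2 - (dC1 a b u0 x - dC1 a b u0 x)\<^sup>2)
         - \<eta> * integral {a..b} (\<lambda>x. \<bar>v x - u0 x\<bar>)"
        by (rule CMP[OF vC u0C va vb rUC close1]) (use rpos in auto)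
      moreover have "integral {a..b} (\<lambda>x. (dC1 a b v x - dC1 a b u0 x)\<^sup>2 - (dC1 a b u0 x - dC1 a b u0 x)\<^sup>2) = Q"
        unfolding Q_def by (rule integral_cong) (simp add: dh)
      moreover have "integral {a..b} (\<lambda>x. \<bar>v x - u0 x\<bar>) \<le> (b - a) * \<delta>"
        using hbd C1_cont[OF ab vC] C1_cont[OF ab u0C] ab
        by (intro int_le_const) (auto intro!: continuous_intros simp: h_def)
      ultimately have "Phi a b K g v - Phi a b K g u0 \<ge> Q - \<eta> * ((b - a) * \<delta>)"
        using etapos by (smt (verit) mult_left_mono)
      moreover have "\<eta> * ((b - a) * \<delta>) = M * \<delta>" using etaL by (simp add: L_def)
      ultimately show ?thesis using True by linarith
    next
      case False
      then have Qle: "integral {a..b} (\<lambda>x. (dC1 a b h x)\<^sup>2) \<le> M * \<delta>" by (simp add: Q_def)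
      obtain k E where kC: "C1_on a b k" and ka: "Da \<longrightarrow> k a = 0" and kb: "Db \<longrightarrow> k b = 0"
        and hk: "\<And>x. x \<in> {a..b} \<Longrightarrow> \<bar>h x - k x\<bar> \<le> 2 * E"
        and dkb: "\<And>x. x \<in> {a..b} \<Longrightarrow> \<bar>dC1 a b k x\<bar> \<le> M + E / (b - a)"
        and G3: "2 * M * E \<le> integral {a..b} (\<lambda>x. (dC1 a b h x)\<^sup>2 - (dC1 a b k x)\<^sup>2)"
        and E0: "0 \<le> E" and G2: "2 * M * E \<le> M * \<delta>"
        using construct[OF ab hC hbd ha hb Mpos Qle] by blast
      have Ed: "2 * E \<le> \<delta>" using G2 Mpos by (simp add: mult.assoc)
      note kd = C1_dC1[OF ab kC]
      define v2 where "v2 = (\<lambda>x. u0 x + k x)"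
      have v2der: "(v2 has_real_derivative dC1 a b u0 x + dC1 a b k x) (at x within {a..b})" if "x \<in> {a..b}" for x
        unfolding v2_def by (auto intro!: derivative_eq_intros kd(2) u0d(2) that)
      have v2cd: "continuous_on {a..b} (\<lambda>x. dC1 a b u0 x + dC1 a b k x)" by (intro continuous_intros kd(1) u0d(1))
      have v2C: "C1_on a b v2" and dv2: "\<And>x. x \<in> {a..b} \<Longrightarrow> dC1 a b v2 x = dC1 a b u0 x + dC1 a b k x"
        using C1_intro[OF ab v2cd v2der] by auto
      have v2A: "v2 \<in> admissible a b Da Db u0" using v2C ka kb by (simp add: admissible_def v2_def)
      have kbd: "\<bar>k x\<bar> \<le> 2 * \<delta>" if "x \<in> {a..b}" for x
        using hk[OF that] hbd[OF that] Ed by (simp add: abs_le_iff)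
      have "supnorm a b k \<le> 2 * \<delta>" by (rule supnorm_le[OF ab kbd])
      moreover have "supnorm a b (dC1 a b k) \<le> M + \<delta> / L"
      proof (rule supnorm_le[OF ab])
        fix x assume x: "x \<in> {a..b}"
        have "E / L \<le> \<delta> / L" using Ed E0 Lpos by (intro divide_right_mono) auto
        then show "\<bar>dC1 a b k x\<bar> \<le> M + \<delta> / L" using dkb[OF x] by (simp add: L_def)
      qed
      ultimately have "C1norm a b k \<le> 2 * \<delta> + (M + \<delta> / L)" by (simp add: C1norm_def)
      also have "\<dots> < \<epsilon>" using d2 epos by (simp add: M_def)
      finally have "C1norm a b (\<lambda>x. v2 x - u0 x) < \<epsilon>" by (simp add: v2_def)
      then have P2: "Phi a b K g v2 \<ge> Phi a b K g u0" using wm[OF v2A] by simp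
      have close2: "\<bar>v2 x - u0 x\<bar> \<le> r" if "x \<in> {a..b}" for x
        using kbd[OF that] d1 by (simp add: v2_def)
      have va2: "Da \<longrightarrow> v a = v2 a" and vb2: "Db \<longrightarrow> v b = v2 b" using va vb ka kb by (auto simp: v2_def)
      have "Phi a b K g v - Phi a b K g v2 \<ge>
         integral {a..b} (\<lambda>x. (dC1 a b v x - dC1 a b u0 x)\<^sup>2 - (dC1 a b v2 x - dC1 a b u0 x)\<^sup>2)
         - \<eta> * integral {a..b} (\<lambda>x. \<bar>v x - v2 x\<bar>)"
        by (rule CMP[OF vC v2C va2 vb2 rUC close1 close2])
      moreover have "integral {a..b} (\<lambda>x. (dC1 a b v x - dC1 a b u0 x)\<^sup>2 - (dC1 a b v2 x - dC1 a b u0 x)\<^sup>2)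
          = integral {a..b} (\<lambda>x. (dC1 a b h x)\<^sup>2 - (dC1 a b k x)\<^sup>2)"
        by (rule integral_cong) (simp add: dh dv2)
      moreover have "integral {a..b} (\<lambda>x. \<bar>v x - v2 x\<bar>) \<le> (b - a) * (2 * E)"
        using hk C1_cont[OF ab vC] C1_cont[OF ab v2C] ab
        by (intro int_le_const) (auto intro!: continuous_intros simp: h_def v2_def algebra_simps)
      ultimately have "Phi a b K g v - Phi a b K g v2 \<ge> 2 * M * E - \<eta> * ((b - a) * (2 * E))"
        using etapos G3 by (smt (verit) mult_left_mono)
      moreover have "\<eta> * ((b - a) * (2 * E)) = 2 * M * E" unfolding etaL[symmetric] L_def by (simp add: algebra_simps)
      ultimately show ?thesis using P2 by linarith
    qed
  qed
  show ?thesis using dpos main by blast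
qed

end

theorem proposition2p3:
  fixes a b K :: real and g u0 :: "real \<Rightarrow> real" and Da Db :: bool
  assumes "a < b"
    and "g C1_differentiable_on UNIV"
    and "C1_on a b u0"
    and "weak_minimizer a b (Phi a b K g) (admissible a b Da Db u0) u0"
  shows "strong_minimizer a b (Phi a b K g) (admissible a b Da Db u0) u0"
proof -
  note ab = assms(1) and u0C = assms(3)
  obtain G where gdv: "\<forall>x\<in>UNIV. (g has_vector_derivative G x) (at x)" and Gc: "continuous_on UNIV G"
    using assms(2) unfolding C1_differentiable_on_def by blast
  have gd: "\<And>x. (g has_real_derivative G x) (at x)"
    using gdv by (simp add: has_real_derivative_iff_has_vector_derivative)
  have u0A: "u0 \<in> admissible a b Da Db u0"
    and "\<exists>\<epsilon>>0. \<forall>v\<in>admissible a b Da Db u0. C1norm a b (\<lambda>x. v x - u0 x) < \<epsilon> \<longrightarrow> Phi a b K g v \<ge> Phi a b K g u0"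
    using assms(4) unfolding weak_minimizer_def by blast+
  then obtain \<epsilon> where epos: "\<epsilon> > 0" and wm0: "\<forall>v\<in>admissible a b Da Db u0. C1norm a b (\<lambda>x. v x - u0 x) < \<epsilon> \<longrightarrow> Phi a b K g v \<ge> Phi a b K g u0"
    by blast
  have wm: "\<And>v. v \<in> admissible a b Da Db u0 \<Longrightarrow> C1norm a b (\<lambda>x. v x - u0 x) < \<epsilon> \<Longrightarrow> Phi a b K g v \<ge> Phi a b K g u0"
    using wm0 by blast
  have "\<exists>\<delta>>0. \<forall>v\<in>admissible a b Da Db u0. supnorm a b (\<lambda>x. v x - u0 x) < \<delta> \<longrightarrow> Phi a b K g v \<ge> Phi a b K g u0"
    by (rule main_ctx[where G=G and \<epsilon>=\<epsilon>]) (use ab gd Gc u0C epos wm in auto)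
  then show ?thesis unfolding strong_minimizer_def using u0A by blast
qed

end
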